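(* Let $\mathcal{R}$ be a cell space and let $E$ be a nonempty subset of $G/G_0$. Put $E'=\{g(g')^{-1}G_0: e,e'\in E,\ g\in e,\ g'\in e'\}$. Then there exists an $(E,E')$-tiling of $\mathcal{R}$.
   Context: A cell space $\mathcal{R}$ consists of a group $G$ acting transitively on the left on a nonempty set $M$ via $\triangleright$, a point $m_0\in M$ and a family $(g_{m_0,m})_{m\in M}$ in $G$ with $g_{m_0,m}\triangleright m_0=m$. $G_0$ is the stabiliser of $m_0$ and $G/G_0$ the set of left cosets (elements of $G/G_0$ are subsets of $G$). The right semi-action $\triangleleft\colon M\times G/G_0\to M$ is $m\triangleleft gG_0=g_{m_0,m}g\triangleright m_0$; for $E\subseteq G/G_0$, $m\triangleleft E=\{m\triangleleft e:e\in E\}$. For $E,E'\subseteq G/G_0$, a subset $T\subseteq M$ is an $(E,E')$-tiling of $\mathcal{R}$ if the family $(t\triangleleft E)_{t\in T}$ is pairwise disjoint and the family $(t\triangleleft E')_{t\in T}$ covers $M$. *)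

theory Defs
  imports "HOL-Algebra.Group_Action"
begin

definition cell_space :: "('g, 'b) monoid_scheme \<Rightarrow> 'm set \<Rightarrow> ('g \<Rightarrow> 'm \<Rightarrow> 'm) \<Rightarrow> 'm \<Rightarrow> ('m \<Rightarrow> 'g) \<Rightarrow> bool"
  where "cell_space G M phi m0 gfam \<longleftrightarrow>
     group G \<and> transitive_action G M phi \<and> M \<noteq> {} \<and> m0 \<in> M \<and>
     (\<forall>m \<in> M. gfam m \<in> carrier G \<and> phi (gfam m) m0 = m)"

definition stab0 :: "('g, 'b) monoid_scheme \<Rightarrow> ('g \<Rightarrow> 'm \<Rightarrow> 'm) \<Rightarrow> 'm \<Rightarrow> 'g set"
  where "stab0 G phi m0 = stabilizer G phi m0"

definition left_cosets :: "('g, 'b) monoid_scheme \<Rightarrow> ('g \<Rightarrow> 'm \<Rightarrow> 'm) \<Rightarrow> 'm \<Rightarrow> 'g set set"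
  where "left_cosets G phi m0 = {g <#\<^bsub>G\<^esub> stab0 G phi m0 | g. g \<in> carrier G}"

text \<open>Right semi-action m <| gG0 = gfam m * g |> m0 (well-defined; uses a representative of the coset).\<close>
definition semi_act :: "('g, 'b) monoid_scheme \<Rightarrow> ('g \<Rightarrow> 'm \<Rightarrow> 'm) \<Rightarrow> 'm \<Rightarrow> ('m \<Rightarrow> 'g) \<Rightarrow> 'm \<Rightarrow> 'g set \<Rightarrow> 'm"
  where "semi_act G phi m0 gfam m c = phi (gfam m \<otimes>\<^bsub>G\<^esub> (SOME g. g \<in> c)) m0"

definition semi_act_set :: "('g, 'b) monoid_scheme \<Rightarrow> ('g \<Rightarrow> 'm \<Rightarrow> 'm) \<Rightarrow> 'm \<Rightarrow> ('m \<Rightarrow> 'g) \<Rightarrow> 'm \<Rightarrow> 'g set set \<Rightarrow> 'm set"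
  where "semi_act_set G phi m0 gfam m E = (\<lambda>e. semi_act G phi m0 gfam m e) ` E"

definition is_tiling :: "('g, 'b) monoid_scheme \<Rightarrow> 'm set \<Rightarrow> ('g \<Rightarrow> 'm \<Rightarrow> 'm) \<Rightarrow> 'm \<Rightarrow> ('m \<Rightarrow> 'g)
    \<Rightarrow> 'g set set \<Rightarrow> 'g set set \<Rightarrow> 'm set \<Rightarrow> bool"
  where "is_tiling G M phi m0 gfam E E' T \<longleftrightarrow>
     T \<subseteq> M \<and>
     (\<forall>t \<in> T. \<forall>t' \<in> T. t \<noteq> t' \<longrightarrow>
        semi_act_set G phi m0 gfam t E \<inter> semi_act_set G phi m0 gfam t' E = {}) \<and>
     M \<subseteq> (\<Union>t \<in> T. semi_act_set G phi m0 gfam t E')"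

end

theory Submission
  imports Defs
begin

lemma semi_act_coset:
  assumes cs: "cell_space G M phi m0 gfam" and m: "m \<in> M" and x: "x \<in> carrier G"
  shows "semi_act G phi m0 gfam m (x <#\<^bsub>G\<^esub> stab0 G phi m0) = phi (gfam m \<otimes>\<^bsub>G\<^esub> x) m0"
proof -
  interpret ta: transitive_action G M phi using cs unfolding cell_space_def by blast
  interpret group G using cs unfolding cell_space_def by blast
  have m0: "m0 \<in> M" using cs unfolding cell_space_def by blast
  have gm: "gfam m \<in> carrier G" using cs m unfolding cell_space_def by blast
  let ?H = "stab0 G phi m0"
  have one: "\<one>\<^bsub>G\<^esub> \<in> ?H" using ta.stabilizer_one_closed[OF m0] by (simp add: stab0_def)
  have "x \<in> x <#\<^bsub>G\<^esub> ?H" unfolding l_coset_def using one x by force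
  hence "(SOME g. g \<in> x <#\<^bsub>G\<^esub> ?H) \<in> x <#\<^bsub>G\<^esub> ?H" by (rule someI)
  then obtain h where h: "h \<in> ?H" and eq: "(SOME g. g \<in> x <#\<^bsub>G\<^esub> ?H) = x \<otimes>\<^bsub>G\<^esub> h"
    unfolding l_coset_def by blast
  have hc: "h \<in> carrier G" and hm: "phi h m0 = m0" using h by (auto simp: stab0_def stabilizer_def)
  have "phi (gfam m \<otimes>\<^bsub>G\<^esub> (x \<otimes>\<^bsub>G\<^esub> h)) m0 = phi ((gfam m \<otimes>\<^bsub>G\<^esub> x) \<otimes>\<^bsub>G\<^esub> h) m0" using gm x hc by (simp add: m_assoc)
  also have "\<dots> = phi (gfam m \<otimes>\<^bsub>G\<^esub> x) (phi h m0)" using ta.composition_rule[OF m0] gm x hc by simp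
  finally show ?thesis unfolding semi_act_def eq using hm by simp
qed

theorem theorem2:
  fixes G :: "('g, 'b) monoid_scheme" and M :: "'m set" and phi :: "'g \<Rightarrow> 'm \<Rightarrow> 'm"
    and m0 :: 'm and gfam :: "'m \<Rightarrow> 'g" and E :: "'g set set"
  assumes "cell_space G M phi m0 gfam"
    and "E \<subseteq> left_cosets G phi m0" and "E \<noteq> {}"
  shows "\<exists>T. is_tiling G M phi m0 gfam E
     {(g \<otimes>\<^bsub>G\<^esub> inv\<^bsub>G\<^esub> g') <#\<^bsub>G\<^esub> stab0 G phi m0 | g g' e e'. e \<in> E \<and> e' \<in> E \<and> g \<in> e \<and> g' \<in> e'} T"
proof -
  note cs = assms(1)
  interpret ta: transitive_action G M phi using cs unfolding cell_space_def by blast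
  interpret group G using cs unfolding cell_space_def by blast
  have m0: "m0 \<in> M" using cs unfolding cell_space_def by blast
  have gf: "\<And>m. m \<in> M \<Longrightarrow> gfam m \<in> carrier G \<and> phi (gfam m) m0 = m"
    using cs unfolding cell_space_def by blast
  let ?H = "stab0 G phi m0"
  let ?E' = "{(g \<otimes>\<^bsub>G\<^esub> inv\<^bsub>G\<^esub> g') <#\<^bsub>G\<^esub> ?H | g g' e e'. e \<in> E \<and> e' \<in> E \<and> g \<in> e \<and> g' \<in> e'}"
  let ?sa = "semi_act_set G phi m0 gfam"
  have one: "\<one>\<^bsub>G\<^esub> \<in> ?H" using ta.stabilizer_one_closed[OF m0] by (simp add: stab0_def)
  have phi1: "phi \<one>\<^bsub>G\<^esub> m0 = m0" using one by (simp add: stab0_def stabilizer_def)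
  have Ecos: "\<And>e. e \<in> E \<Longrightarrow> \<exists>x\<in>carrier G. e = x <#\<^bsub>G\<^esub> ?H"
    using assms(2) unfolding left_cosets_def by blast
  have xin: "\<And>x. x \<in> carrier G \<Longrightarrow> x \<in> x <#\<^bsub>G\<^esub> ?H" unfolding l_coset_def using one by force
  define S where "S = {T. T \<subseteq> M \<and> (\<forall>t \<in> T. \<forall>t' \<in> T. t \<noteq> t' \<longrightarrow> ?sa t E \<inter> ?sa t' E = {})}"
  have "\<forall>C\<in>chains S. \<Union>C \<in> S"
  proof
    fix C assume C: "C \<in> chains S"
    show "\<Union>C \<in> S" unfolding S_def
    proof (intro CollectI conjI ballI impI)
      show "\<Union>C \<subseteq> M" using C unfolding chains_def S_def by blast
    next
      fix t t' assume t: "t \<in> \<Union>C" and t': "t' \<in> \<Union>C" and ne: "t \<noteq> t'"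
      then obtain A B where A: "A \<in> C" "t \<in> A" and B: "B \<in> C" "t' \<in> B" by blast
      from C A B have "A \<subseteq> B \<or> B \<subseteq> A" unfolding chains_def chain_subset_def by blast
      moreover have "A \<in> S" "B \<in> S" using C A B unfolding chains_def by blast+
      ultimately show "?sa t E \<inter> ?sa t' E = {}" using A B ne unfolding S_def by blast
    qed
  qed
  from Zorn_Lemma[OF this] obtain T where TS: "T \<in> S" and max: "\<forall>X\<in>S. T \<subseteq> X \<longrightarrow> X = T" by blast
  have TM: "T \<subseteq> M" using TS unfolding S_def by blast
  have cover: "m \<in> (\<Union>t \<in> T. ?sa t ?E')" if m: "m \<in> M" for m
  proof (cases "m \<in> T")
    case True
    obtain e where e: "e \<in> E" using assms(3) by blast
    then obtain x where x: "x \<in> carrier G" "e = x <#\<^bsub>G\<^esub> ?H" using Ecos by blast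
    have "(x \<otimes>\<^bsub>G\<^esub> inv\<^bsub>G\<^esub> x) <#\<^bsub>G\<^esub> ?H \<in> ?E'" using e x xin by blast
    moreover have "semi_act G phi m0 gfam m ((x \<otimes>\<^bsub>G\<^esub> inv\<^bsub>G\<^esub> x) <#\<^bsub>G\<^esub> ?H) = m"
      using semi_act_coset[OF cs m, of "x \<otimes>\<^bsub>G\<^esub> inv\<^bsub>G\<^esub> x"] x gf[OF m] by simp
    ultimately have "m \<in> ?sa m ?E'" unfolding semi_act_set_def by force
    thus ?thesis using True by blast
  next
    case False
    have "insert m T \<notin> S" using max False by blast
    then obtain t where tT: "t \<in> T" and ne: "t \<noteq> m" and int: "?sa m E \<inter> ?sa t E \<noteq> {}"
      using TS m unfolding S_def by blast
    then obtain e e' where e: "e \<in> E" and e': "e' \<in> E"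
      and eq: "semi_act G phi m0 gfam m e = semi_act G phi m0 gfam t e'"
      unfolding semi_act_set_def by blast
    obtain x where x: "x \<in> carrier G" "e = x <#\<^bsub>G\<^esub> ?H" using Ecos e by blast
    obtain y where y: "y \<in> carrier G" "e' = y <#\<^bsub>G\<^esub> ?H" using Ecos e' by blast
    have tM: "t \<in> M" using tT TM by blast
    define b where "b = gfam t"
    define c where "c = gfam m"
    have b: "b \<in> carrier G" and c: "c \<in> carrier G" using gf m tM b_def c_def by auto
    have eq2: "phi (c \<otimes>\<^bsub>G\<^esub> x) m0 = phi (b \<otimes>\<^bsub>G\<^esub> y) m0"
      using eq semi_act_coset[OF cs m x(1)] semi_act_coset[OF cs tM y(1)] x y b_def c_def by simp
    define a where "a = inv\<^bsub>G\<^esub> (b \<otimes>\<^bsub>G\<^esub> y) \<otimes>\<^bsub>G\<^esub> (c \<otimes>\<^bsub>G\<^esub> x)"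
    have ac: "a \<in> carrier G" using a_def b c x y by simp
    have "phi a m0 = phi (inv\<^bsub>G\<^esub> (b \<otimes>\<^bsub>G\<^esub> y)) (phi (c \<otimes>\<^bsub>G\<^esub> x) m0)"
      unfolding a_def using ta.composition_rule[OF m0] b c x y by simp
    also have "\<dots> = phi (inv\<^bsub>G\<^esub> (b \<otimes>\<^bsub>G\<^esub> y)) (phi (b \<otimes>\<^bsub>G\<^esub> y) m0)" using eq2 by simp
    also have "\<dots> = phi (inv\<^bsub>G\<^esub> (b \<otimes>\<^bsub>G\<^esub> y) \<otimes>\<^bsub>G\<^esub> (b \<otimes>\<^bsub>G\<^esub> y)) m0"
      using ta.composition_rule[OF m0, of "inv\<^bsub>G\<^esub> (b \<otimes>\<^bsub>G\<^esub> y)" "b \<otimes>\<^bsub>G\<^esub> y"] b y by simp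
    also have "\<dots> = m0" using b y phi1 by simp
    finally have aH: "a \<in> ?H" using ac by (simp add: stab0_def stabilizer_def)
    have ya: "y \<otimes>\<^bsub>G\<^esub> a \<in> e'" unfolding y(2) l_coset_def using aH by blast
    have xe: "x \<in> e" using x xin by blast
    have alg: "b \<otimes>\<^bsub>G\<^esub> ((y \<otimes>\<^bsub>G\<^esub> a) \<otimes>\<^bsub>G\<^esub> inv\<^bsub>G\<^esub> x) = c"
      unfolding a_def using b c x y by (simp add: m_assoc inv_mult_group flip: m_assoc[of y "inv\<^bsub>G\<^esub> y"] m_assoc[of b "inv\<^bsub>G\<^esub> b"])
    have "(y \<otimes>\<^bsub>G\<^esub> a) \<otimes>\<^bsub>G\<^esub> inv\<^bsub>G\<^esub> x \<in> carrier G" using ac x y by simp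
    hence "semi_act G phi m0 gfam t (((y \<otimes>\<^bsub>G\<^esub> a) \<otimes>\<^bsub>G\<^esub> inv\<^bsub>G\<^esub> x) <#\<^bsub>G\<^esub> ?H) = phi c m0"
      using semi_act_coset[OF cs tM] alg b_def by simp
    also have "\<dots> = m" using gf m c_def by simp
    finally have "m \<in> ?sa t ?E'"
      unfolding semi_act_set_def using ya xe e e' by force
    thus ?thesis using tT by blast
  qed
  have "is_tiling G M phi m0 gfam E ?E' T"
    unfolding is_tiling_def using TS cover unfolding S_def by blast
  thus ?thesis by blast
qed

end
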